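(* Let $D=(Q,\Sigma,\delta,q_0,A)$ and $D'=(Q',\Sigma,\delta',q_0',A')$ be minimized DFAs over the same alphabet with $L(D)\sim L(D')$. Then $D\cong_I D'$.
   Context: All DFAs are complete (total transition function $\delta$, extended to words in the usual way) and all their states are reachable from the start state. A DFA is \emph{minimized} if it is the minimal DFA for its language, i.e. all states are reachable and no two distinct states are equivalent (no two distinct states $p\neq q$ satisfy $L(p)=L(q)$, where $L(q)$ is the language accepted when $q$ is used as start state). Two languages $L,L'$ are \emph{finitely different}, written $L\sim L'$, if the symmetric difference $L\triangle L'$ is finite. The \emph{infinite part} $I(D)$ of a DFA $D$ is the set of states $q\in Q$ such that $\{w\in\Sigma^*:\delta(q_0,w)=q\}$ is infinite (equivalently: $q$ lies on a cycle, i.e. $\delta(q,w)=q$ for some nonempty $w$, or is reachable from a state on a cycle); the \emph{finite part} is $F(D)=Q\setminus I(D)$. We write $D\cong_I D'$ (isomorphic infinite parts) if there is a bijection $f:I(D)\to I(D')$ such that (1) for all $q\in I(D)$, $q\in A\iff f(q)\in A'$, and (2) for all $q\in I(D)$ and $c\in\Sigma$, $f(\delta(q,c))=\delta'(f(q),c)$. *)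

theory Defs
  imports Main
begin

definition delta_star :: "('q \<Rightarrow> 'a \<Rightarrow> 'q) \<Rightarrow> 'q \<Rightarrow> 'a list \<Rightarrow> 'q" where
  "delta_star \<delta> q w = foldl \<delta> q w"

definition dfa :: "'q set \<Rightarrow> 'a set \<Rightarrow> ('q \<Rightarrow> 'a \<Rightarrow> 'q) \<Rightarrow> 'q \<Rightarrow> 'q set \<Rightarrow> bool" where
  "dfa Q \<Sigma> \<delta> q0 A \<longleftrightarrow> finite Q \<and> finite \<Sigma> \<and> q0 \<in> Q \<and> A \<subseteq> Q
     \<and> (\<forall>q\<in>Q. \<forall>c\<in>\<Sigma>. \<delta> q c \<in> Q)
     \<and> (\<forall>q\<in>Q. \<exists>w\<in>lists \<Sigma>. delta_star \<delta> q0 w = q)"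

definition lang_from :: "'a set \<Rightarrow> ('q \<Rightarrow> 'a \<Rightarrow> 'q) \<Rightarrow> 'q set \<Rightarrow> 'q \<Rightarrow> 'a list set" where
  "lang_from \<Sigma> \<delta> A q = {w \<in> lists \<Sigma>. delta_star \<delta> q w \<in> A}"

definition lang :: "'a set \<Rightarrow> ('q \<Rightarrow> 'a \<Rightarrow> 'q) \<Rightarrow> 'q \<Rightarrow> 'q set \<Rightarrow> 'a list set" where
  "lang \<Sigma> \<delta> q0 A = lang_from \<Sigma> \<delta> A q0"

definition minimized :: "'q set \<Rightarrow> 'a set \<Rightarrow> ('q \<Rightarrow> 'a \<Rightarrow> 'q) \<Rightarrow> 'q \<Rightarrow> 'q set \<Rightarrow> bool" where
  "minimized Q \<Sigma> \<delta> q0 A \<longleftrightarrow> dfa Q \<Sigma> \<delta> q0 A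
     \<and> (\<forall>p\<in>Q. \<forall>q\<in>Q. p \<noteq> q \<longrightarrow> lang_from \<Sigma> \<delta> A p \<noteq> lang_from \<Sigma> \<delta> A q)"

definition finitely_different :: "'b set \<Rightarrow> 'b set \<Rightarrow> bool" where
  "finitely_different L L' \<longleftrightarrow> finite ((L - L') \<union> (L' - L))"

definition infinite_part :: "'q set \<Rightarrow> 'a set \<Rightarrow> ('q \<Rightarrow> 'a \<Rightarrow> 'q) \<Rightarrow> 'q \<Rightarrow> 'q set" where
  "infinite_part Q \<Sigma> \<delta> q0 = {q \<in> Q. infinite {w \<in> lists \<Sigma>. delta_star \<delta> q0 w = q}}"

definition iso_infinite_parts ::
  "'q set \<Rightarrow> 'a set \<Rightarrow> ('q \<Rightarrow> 'a \<Rightarrow> 'q) \<Rightarrow> 'q \<Rightarrow> 'q set \<Rightarrow>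
   'p set \<Rightarrow> ('p \<Rightarrow> 'a \<Rightarrow> 'p) \<Rightarrow> 'p \<Rightarrow> 'p set \<Rightarrow> bool" where
  "iso_infinite_parts Q \<Sigma> \<delta> q0 A Q' \<delta>' q0' A' \<longleftrightarrow>
     (\<exists>f. bij_betw f (infinite_part Q \<Sigma> \<delta> q0) (infinite_part Q' \<Sigma> \<delta>' q0')
        \<and> (\<forall>q\<in>infinite_part Q \<Sigma> \<delta> q0. q \<in> A \<longleftrightarrow> f q \<in> A')
        \<and> (\<forall>q\<in>infinite_part Q \<Sigma> \<delta> q0. \<forall>c\<in>\<Sigma>. f (\<delta> q c) = \<delta>' (f q) c))"

end

theory Submission
  imports Defs
begin

lemma ds_append: "delta_star d q (u @ v) = delta_star d (delta_star d q u) v"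
  by (simp add: delta_star_def)

lemma ds_Cons: "delta_star d q (c # v) = delta_star d (d q c) v"
  by (simp add: delta_star_def)

lemma ds_Nil: "delta_star d q [] = q"
  by (simp add: delta_star_def)

lemma ds_in:
  assumes "\<forall>q\<in>Q. \<forall>c\<in>S. d q c \<in> Q" "q \<in> Q" "w \<in> lists S"
  shows "delta_star d q w \<in> Q"
  using assms(3,2)
proof (induction w arbitrary: q)
  case Nil then show ?case by (simp add: ds_Nil)
next
  case (Cons c w) then show ?case using assms(1) by (simp add: ds_Cons)
qed

lemma ds_in_dfa:
  assumes "dfa Q S d q0 A" "w \<in> lists S"
  shows "delta_star d q0 w \<in> Q"
  using assms ds_in[of Q S d q0 w] unfolding dfa_def by blast

definition unb :: "'a set \<Rightarrow> ('q \<Rightarrow> 'a \<Rightarrow> 'q) \<Rightarrow> 'q \<Rightarrow> 'q \<Rightarrow> bool" where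
  "unb S d q0 q \<longleftrightarrow> (\<forall>n. \<exists>w\<in>lists S. n \<le> length w \<and> delta_star d q0 w = q)"

lemma inf_part_char:
  assumes "finite S"
  shows "q \<in> infinite_part Q S d q0 \<longleftrightarrow> q \<in> Q \<and> unb S d q0 q"
proof
  assume h: "q \<in> infinite_part Q S d q0"
  hence qQ: "q \<in> Q" and inf: "infinite {w \<in> lists S. delta_star d q0 w = q}"
    by (auto simp: infinite_part_def)
  have "unb S d q0 q" unfolding unb_def
  proof
    fix n
    show "\<exists>w\<in>lists S. n \<le> length w \<and> delta_star d q0 w = q"
    proof (rule ccontr)
      assume "\<not> ?thesis"
      hence "{w \<in> lists S. delta_star d q0 w = q} \<subseteq> {xs. set xs \<subseteq> S \<and> length xs \<le> n}"
        by force
      moreover have "finite {xs. set xs \<subseteq> S \<and> length xs \<le> n}"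
        using finite_lists_length_le[OF assms] by blast
      ultimately show False using inf finite_subset by blast
    qed
  qed
  then show "q \<in> Q \<and> unb S d q0 q" using qQ by blast
next
  assume h: "q \<in> Q \<and> unb S d q0 q"
  show "q \<in> infinite_part Q S d q0"
  proof (rule ccontr)
    assume "q \<notin> infinite_part Q S d q0"
    hence fin: "finite {w \<in> lists S. delta_star d q0 w = q}"
      using h by (auto simp: infinite_part_def)
    obtain w where w: "w \<in> lists S" "Suc (Max (length ` {w \<in> lists S. delta_star d q0 w = q})) \<le> length w"
      "delta_star d q0 w = q"
      using h unfolding unb_def by blast
    have "length w \<le> Max (length ` {w \<in> lists S. delta_star d q0 w = q})"
      using fin w by (intro Max_ge) auto
    then show False using w by simp
  qed
qed

lemma lang_from_Cons:
  assumes "c \<in> S"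
  shows "lang_from S d A (d q c) = {x \<in> lists S. c # x \<in> lang_from S d A q}"
  using assms by (auto simp: lang_from_def ds_Cons)

lemma lang_from_ds:
  assumes "w \<in> lists S"
  shows "lang_from S d A (delta_star d q0 w) = {x \<in> lists S. w @ x \<in> lang S d q0 A}"
  using assms by (auto simp: lang_from_def lang_def ds_append)

lemma exists_match:
  assumes D: "dfa Q S d q0 A" and M': "minimized Q' S d' q0' A'"
    and fd: "finitely_different (lang S d q0 A) (lang S d' q0' A')"
    and p: "p \<in> infinite_part Q S d q0"
  shows "\<exists>p'\<in>infinite_part Q' S d' q0'. lang_from S d' A' p' = lang_from S d A p"
proof -
  have D': "dfa Q' S d' q0' A'" and inj': "\<forall>p\<in>Q'. \<forall>q\<in>Q'. p \<noteq> q \<longrightarrow> lang_from S d' A' p \<noteq> lang_from S d' A' q"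
    using M' by (auto simp: minimized_def)
  have finS: "finite S" using D by (simp add: dfa_def)
  define X where "X = (lang S d q0 A - lang S d' q0' A') \<union> (lang S d' q0' A' - lang S d q0 A)"
  have finX: "finite X" using fd by (simp add: finitely_different_def X_def)
  define N where "N = Suc (Max (length ` X))"
  have XN: "length x < N" if "x \<in> X" for x
    using finX that unfolding N_def by (simp add: le_imp_less_Suc)
  have eq: "lang_from S d' A' (delta_star d' q0' w) = lang_from S d A (delta_star d q0 w)"
    if "w \<in> lists S" "N \<le> length w" for w
  proof -
    have h: "w @ x \<in> lang S d q0 A \<longleftrightarrow> w @ x \<in> lang S d' q0' A'" for x
    proof -
      have "w @ x \<notin> X" using XN[of "w @ x"] that by auto
      then show ?thesis unfolding X_def by blast
    qed
    show ?thesis unfolding lang_from_ds[OF that(1), of d' A' q0'] lang_from_ds[OF that(1), of d A q0] by (simp add: h)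
  qed
  have pQu: "p \<in> Q \<and> unb S d q0 p" using p by (simp add: inf_part_char[OF finS])
  have pQ: "p \<in> Q" and up: "unb S d q0 p" using pQu by auto
  obtain w0 where w0: "w0 \<in> lists S" "N \<le> length w0" "delta_star d q0 w0 = p"
    using up unfolding unb_def by blast
  define p' where "p' = delta_star d' q0' w0"
  have p'Q: "p' \<in> Q'" using ds_in_dfa[OF D' w0(1)] p'_def by simp
  have Lp': "lang_from S d' A' p' = lang_from S d A p" using eq[OF w0(1,2)] w0(3) p'_def by simp
  have "unb S d' q0' p'" unfolding unb_def
  proof
    fix n
    obtain w where w: "w \<in> lists S" "max n N \<le> length w" "delta_star d q0 w = p"
      using up unfolding unb_def by blast
    have "delta_star d' q0' w \<in> Q'" using ds_in_dfa[OF D' w(1)] .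
    moreover have "lang_from S d' A' (delta_star d' q0' w) = lang_from S d' A' p'"
      using eq[OF w(1)] w(2,3) Lp' by simp
    ultimately have "delta_star d' q0' w = p'" using inj' p'Q by blast
    then show "\<exists>w\<in>lists S. n \<le> length w \<and> delta_star d' q0' w = p'" using w by auto
  qed
  then have "p' \<in> infinite_part Q' S d' q0'" using p'Q by (simp add: inf_part_char[OF finS])
  then show ?thesis using Lp' by blast
qed

lemma step_inf:
  assumes D: "dfa Q S d q0 A" and q: "q \<in> infinite_part Q S d q0" and c: "c \<in> S"
  shows "d q c \<in> infinite_part Q S d q0"
proof -
  have finS: "finite S" using D by (simp add: dfa_def)
  have qQu: "q \<in> Q \<and> unb S d q0 q" using q by (simp add: inf_part_char[OF finS])
  have qQ: "q \<in> Q" and u: "unb S d q0 q" using qQu by auto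
  have "\<forall>q\<in>Q. \<forall>c\<in>S. d q c \<in> Q" using D by (simp add: dfa_def)
  then have "d q c \<in> Q" using qQ c by blast
  moreover have "unb S d q0 (d q c)" unfolding unb_def
  proof
    fix n
    obtain w where "w \<in> lists S" "n \<le> length w" "delta_star d q0 w = q" using u unfolding unb_def by blast
    moreover have "delta_star d q0 (w @ [c]) = d q c" using \<open>delta_star d q0 w = q\<close>
      by (simp add: ds_append ds_Cons ds_Nil)
    ultimately show "\<exists>w\<in>lists S. n \<le> length w \<and> delta_star d q0 w = d q c"
      using c by (intro bexI[of _ "w @ [c]"]) auto
  qed
  ultimately show ?thesis by (simp add: inf_part_char[OF finS])
qed

lemma acc_iff:
  assumes "dfa Q S d q0 A" "q \<in> Q"
  shows "q \<in> A \<longleftrightarrow> [] \<in> lang_from S d A q"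
  by (simp add: lang_from_def ds_Nil)

theorem mainTheorem1:
  fixes Q :: "'q set" and \<Sigma> :: "'a set" and \<delta> :: "'q \<Rightarrow> 'a \<Rightarrow> 'q" and q0 :: 'q and A :: "'q set"
    and Q' :: "'p set" and \<delta>' :: "'p \<Rightarrow> 'a \<Rightarrow> 'p" and q0' :: 'p and A' :: "'p set"
  assumes "minimized Q \<Sigma> \<delta> q0 A"
    and "minimized Q' \<Sigma> \<delta>' q0' A'"
    and "finitely_different (lang \<Sigma> \<delta> q0 A) (lang \<Sigma> \<delta>' q0' A')"
  shows "iso_infinite_parts Q \<Sigma> \<delta> q0 A Q' \<delta>' q0' A'"
proof -
  let ?I = "infinite_part Q \<Sigma> \<delta> q0" and ?I' = "infinite_part Q' \<Sigma> \<delta>' q0'"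
  let ?L = "lang_from \<Sigma> \<delta> A" and ?L' = "lang_from \<Sigma> \<delta>' A'"
  have D: "dfa Q \<Sigma> \<delta> q0 A" and inj: "\<forall>p\<in>Q. \<forall>q\<in>Q. p \<noteq> q \<longrightarrow> ?L p \<noteq> ?L q"
    using assms(1) by (auto simp: minimized_def)
  have D': "dfa Q' \<Sigma> \<delta>' q0' A'" and inj': "\<forall>p\<in>Q'. \<forall>q\<in>Q'. p \<noteq> q \<longrightarrow> ?L' p \<noteq> ?L' q"
    using assms(2) by (auto simp: minimized_def)
  have fd2: "finitely_different (lang \<Sigma> \<delta>' q0' A') (lang \<Sigma> \<delta> q0 A)"
    using assms(3) by (simp add: finitely_different_def Un_commute)
  have IQ: "?I \<subseteq> Q" and IQ': "?I' \<subseteq> Q'" by (auto simp: infinite_part_def)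
  define f where "f p = (SOME p'. p' \<in> ?I' \<and> ?L' p' = ?L p)" for p
  have f: "f p \<in> ?I' \<and> ?L' (f p) = ?L p" if "p \<in> ?I" for p
    unfolding f_def using exists_match[OF D assms(2,3) that] by (rule someI2_bex) blast
  have bij: "bij_betw f ?I ?I'"
    unfolding bij_betw_def
  proof
    show "inj_on f ?I"
    proof (rule inj_onI)
      fix x y assume "x \<in> ?I" "y \<in> ?I" "f x = f y"
      then show "x = y" using f inj IQ by (metis subsetD)
    qed
    show "f ` ?I = ?I'"
    proof
      show "f ` ?I \<subseteq> ?I'" using f by blast
      show "?I' \<subseteq> f ` ?I"
      proof
        fix p' assume p': "p' \<in> ?I'"
        obtain p where p: "p \<in> ?I" "?L p = ?L' p'" using exists_match[OF D' assms(1) fd2 p'] by blast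
        then have "f p = p'" using f[OF p(1)] inj' IQ' p' by (metis subsetD)
        then show "p' \<in> f ` ?I" using p by blast
      qed
    qed
  qed
  moreover have "\<forall>q\<in>?I. q \<in> A \<longleftrightarrow> f q \<in> A'"
  proof
    fix q assume q: "q \<in> ?I"
    show "q \<in> A \<longleftrightarrow> f q \<in> A'"
      using f[OF q] acc_iff[OF D, of q] acc_iff[OF D', of "f q"] q IQ IQ' by auto
  qed
  moreover have "\<forall>q\<in>?I. \<forall>c\<in>\<Sigma>. f (\<delta> q c) = \<delta>' (f q) c"
  proof (intro ballI)
    fix q c assume q: "q \<in> ?I" and c: "c \<in> \<Sigma>"
    have s: "\<delta> q c \<in> ?I" using step_inf[OF D q c] .
    have s': "\<delta>' (f q) c \<in> ?I'" using step_inf[OF D' _ c] f[OF q] by blast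
    have "?L' (\<delta>' (f q) c) = ?L (\<delta> q c)"
      using lang_from_Cons[OF c, of \<delta>' A' "f q"] lang_from_Cons[OF c, of \<delta> A q] f[OF q] by simp
    also have "\<dots> = ?L' (f (\<delta> q c))" using f[OF s] by simp
    finally show "f (\<delta> q c) = \<delta>' (f q) c" using inj' s' f[OF s] IQ' by blast
  qed
  ultimately show ?thesis unfolding iso_infinite_parts_def by blast
qed

end
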